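(* The two-dimensional subalgebras of ${\rm S}_2$ are exactly $\langle e_1,e_2\rangle$, $\langle e_1\pm e_3,e_2\rangle$ and $\langle e_1,\alpha e_2+e_3\rangle$ ($\alpha\in\mathbb{C}$). Up to automorphisms of ${\rm S}_2$, every two-dimensional subalgebra is equivalent to one of $\langle e_1,e_2\rangle$, $\langle e_1+e_3,e_2\rangle$, $\langle e_1-e_3,e_2\rangle$, $\langle e_1,e_3\rangle$.
   Context: ${\rm S}_2$ is the complex algebra with basis $e_1,e_2,e_3$, unit $e_1$ ($e_1e_i=e_ie_1=e_i$), $e_2e_3=e_2$, $e_3e_2=-e_2$, $e_3e_3=e_1$; all other products of basis elements are zero. A subalgebra is a linear subspace closed under multiplication (it need not contain $e_1$). Equivalence up to automorphisms means one is mapped onto the other by an algebra automorphism. $\langle S\rangle$ denotes linear span. *)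

theory Defs
  imports "HOL-Analysis.Analysis"
begin

text \<open>The algebra S_2: underlying space complex^3, coordinates 1,2,3 w.r.t. basis e1,e2,e3.
 Multiplication is the bilinear extension of the table on basis elements.\<close>

definition s2e1 :: "complex ^ 3" where "s2e1 = (\<chi> i. if i = 1 then 1 else 0)"
definition s2e2 :: "complex ^ 3" where "s2e2 = (\<chi> i. if i = 2 then 1 else 0)"
definition s2e3 :: "complex ^ 3" where "s2e3 = (\<chi> i. if i = 3 then 1 else 0)"

definition s2mult :: "complex ^ 3 \<Rightarrow> complex ^ 3 \<Rightarrow> complex ^ 3" where
  "s2mult x y = (\<chi> i.
     if i = 1 then x$1 * y$1 + x$3 * y$3
     else if i = 2 then x$1 * y$2 + x$2 * y$1 + x$2 * y$3 - x$3 * y$2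
     else x$1 * y$3 + x$3 * y$1)"

definition s2_subalgebra :: "(complex ^ 3) set \<Rightarrow> bool" where
  "s2_subalgebra A \<longleftrightarrow> vec.subspace A \<and> (\<forall>x\<in>A. \<forall>y\<in>A. s2mult x y \<in> A)"

definition s2_automorphism :: "(complex ^ 3 \<Rightarrow> complex ^ 3) \<Rightarrow> bool" where
  "s2_automorphism f \<longleftrightarrow> Vector_Spaces.linear (*s) (*s) f \<and> bij f \<and>
     (\<forall>x y. f (s2mult x y) = s2mult (f x) (f y))"

end

theory Submission
  imports Defs
begin

lemma vec3_eq: "(x::complex^3) = y \<longleftrightarrow> x$1 = y$1 \<and> x$2 = y$2 \<and> x$3 = y$3"
  by (simp add: vec_eq_iff forall_3)

lemma e_simps[simp]:
  "s2e1$1 = 1" "s2e1$2 = 0" "s2e1$3 = 0"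
  "s2e2$1 = 0" "s2e2$2 = 1" "s2e2$3 = 0"
  "s2e3$1 = 0" "s2e3$2 = 0" "s2e3$3 = 1"
  by (simp_all add: s2e1_def s2e2_def s2e3_def)

lemma mult_simps[simp]:
  "s2mult x y $ 1 = x$1 * y$1 + x$3 * y$3"
  "s2mult x y $ 2 = x$1 * y$2 + x$2 * y$1 + x$2 * y$3 - x$3 * y$2"
  "s2mult x y $ 3 = x$1 * y$3 + x$3 * y$1"
  by (simp_all add: s2mult_def)

lemma span2: "x \<in> vec.span {p, q} \<longleftrightarrow> (\<exists>a b. x = a *s p + b *s q)"
  apply (simp add: vec.span_insert vec.span_singleton)
  by (metis (no_types, lifting) add_diff_cancel_left' diff_add_cancel add.commute)

lemma span2I: "x = a *s p + b *s q \<Longrightarrow> x \<in> vec.span {p, q}"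
  using span2 by blast

lemma indep2: "p \<noteq> 0 \<Longrightarrow> (\<And>c. q \<noteq> c *s p) \<Longrightarrow> vec.independent {q, p}"
  by (auto simp: vec.independent_insert vec.span_singleton)

lemma dim2: "p \<noteq> 0 \<Longrightarrow> (\<And>c. q \<noteq> c *s p) \<Longrightarrow> vec.dim (vec.span {q, p}) = 2"
proof -
  assume a: "p \<noteq> 0" "\<And>c. q \<noteq> c *s p"
  have "q \<noteq> p" using a(2)[of 1] by simp
  then show ?thesis by (simp add: vec.dim_eq_card_independent[OF indep2[OF a]])
qed

lemma span_eq2:
  assumes "u' \<in> vec.span {u, v}" "v' \<in> vec.span {u, v}" "u \<in> vec.span {u', v'}" "v \<in> vec.span {u', v'}"
  shows "vec.span {u, v} = vec.span {u', v'}"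
  using assms by (intro antisym vec.span_minimal) auto

lemma mult_left_lin: "s2mult (a *s u + b *s v) y = a *s s2mult u y + b *s s2mult v y"
  by (simp add: vec3_eq algebra_simps)
lemma mult_right_lin: "s2mult y (a *s u + b *s v) = a *s s2mult y u + b *s s2mult y v"
  by (simp add: vec3_eq algebra_simps)

lemma subalg_span2:
  assumes "s2mult u u \<in> vec.span {u, v}" "s2mult u v \<in> vec.span {u, v}"
    "s2mult v u \<in> vec.span {u, v}" "s2mult v v \<in> vec.span {u, v}"
  shows "s2_subalgebra (vec.span {u, v})"
  unfolding s2_subalgebra_def
proof (intro conjI ballI)
  fix x y assume x: "x \<in> vec.span {u, v}" and y: "y \<in> vec.span {u, v}"
  from x obtain a b where xa: "x = a *s u + b *s v" using span2 by blast
  from y obtain c d where yc: "y = c *s u + d *s v" using span2 by blast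
  have "s2mult x y = a *s (c *s s2mult u u + d *s s2mult u v) + b *s (c *s s2mult v u + d *s s2mult v v)"
    unfolding xa yc mult_left_lin mult_right_lin by (simp add: vec3_eq algebra_simps)
  also have "\<dots> \<in> vec.span {u, v}"
    using assms by (intro vec.span_add vec.span_scale) auto
  finally show "s2mult x y \<in> vec.span {u, v}" .
qed simp

lemma sp_u: "x = c *s u \<Longrightarrow> x \<in> vec.span {u, v}"
  by (simp add: vec.span_base vec.span_scale)
lemma sp_v: "x = c *s v \<Longrightarrow> x \<in> vec.span {u, v}"
  by (simp add: vec.span_base vec.span_scale)

lemma conv1: "s2_subalgebra (vec.span {s2e1, s2e2}) \<and> vec.dim (vec.span {s2e1, s2e2}) = 2"
proof
  show "s2_subalgebra (vec.span {s2e1, s2e2})"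
    by (rule subalg_span2; (rule sp_u[where c=1], simp add: vec3_eq; fail)?; (rule sp_v[where c=1], simp add: vec3_eq; fail)?; (rule sp_v[where c=0], simp add: vec3_eq; fail)?)
  show "vec.dim (vec.span {s2e1, s2e2}) = 2"
    by (rule dim2) (auto simp: vec3_eq)
qed

lemma conv2: "s2_subalgebra (vec.span {s2e1 + s2e3, s2e2}) \<and> vec.dim (vec.span {s2e1 + s2e3, s2e2}) = 2"
proof
  show "s2_subalgebra (vec.span {s2e1 + s2e3, s2e2})"
    by (rule subalg_span2; (rule sp_u[where c=2], simp add: vec3_eq; fail)?; (rule sp_v[where c=2], simp add: vec3_eq; fail)?; (rule sp_v[where c=0], simp add: vec3_eq; fail)?)
  show "vec.dim (vec.span {s2e1 + s2e3, s2e2}) = 2"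
    by (rule dim2) (auto simp: vec3_eq)
qed

lemma conv3: "s2_subalgebra (vec.span {s2e1 - s2e3, s2e2}) \<and> vec.dim (vec.span {s2e1 - s2e3, s2e2}) = 2"
proof
  show "s2_subalgebra (vec.span {s2e1 - s2e3, s2e2})"
    by (rule subalg_span2; (rule sp_u[where c=2], simp add: vec3_eq; fail)?; (rule sp_v[where c=2], simp add: vec3_eq; fail)?; (rule sp_v[where c=0], simp add: vec3_eq; fail)?)
  show "vec.dim (vec.span {s2e1 - s2e3, s2e2}) = 2"
    by (rule dim2) (auto simp: vec3_eq)
qed

lemma conv4: "s2_subalgebra (vec.span {s2e1, \<alpha> *s s2e2 + s2e3}) \<and> vec.dim (vec.span {s2e1, \<alpha> *s s2e2 + s2e3}) = 2"
proof
  show "s2_subalgebra (vec.span {s2e1, \<alpha> *s s2e2 + s2e3})"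
    by (rule subalg_span2; (rule sp_u[where c=1], simp add: vec3_eq; fail)?; (rule sp_v[where c=1], simp add: vec3_eq; fail)?)
  show "vec.dim (vec.span {s2e1, \<alpha> *s s2e2 + s2e3}) = 2"
    by (rule dim2) (auto simp: vec3_eq)
qed


lemma indep_pair:
  assumes "vec.independent {p, q}" "p \<noteq> q" "a *s p + b *s q = 0"
  shows "a = 0 \<and> b = 0"
proof -
  have iq: "vec.independent {q}" and pn: "p \<notin> vec.span {q}"
    using assms(1,2) by (auto simp: vec.independent_insert)
  have q0: "q \<noteq> 0" using iq vec.dependent_zero by blast
  have a0: "a = 0"
  proof (rule ccontr)
    assume "a \<noteq> 0"
    then have "p = (- b / a) *s q" using assms(3)
    proof -
      have "a *s p = (- b) *s q" using assms(3) by (simp add: eq_neg_iff_add_eq_0)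
      then have "(1/a) *s (a *s p) = (1/a) *s ((- b) *s q)" by simp
      then show ?thesis using \<open>a \<noteq> 0\<close> by simp
    qed
    then have "p \<in> vec.span {q}" by (metis vec.span_base vec.span_scale singletonI)
    with pn show False by simp
  qed
  then have "b *s q = 0" using assms(3) by simp
  then show ?thesis using q0 a0 by simp
qed

lemma cross_dep:
  fixes p q :: "complex^3"
  assumes ind: "\<And>a b. a *s p + b *s q = 0 \<Longrightarrow> a = 0 \<and> b = 0"
    and c1: "p$1 * q$2 = p$2 * q$1" and c2: "p$1 * q$3 = p$3 * q$1" and c3: "p$2 * q$3 = p$3 * q$2"
  shows False
proof -
  have p0: "p \<noteq> 0" using ind[of 1 0] by auto
  then have "p$1 \<noteq> 0 \<or> p$2 \<noteq> 0 \<or> p$3 \<noteq> 0" by (simp add: vec3_eq)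
  then show False
  proof (elim disjE)
    assume h: "p$1 \<noteq> 0"
    have "q$1 *s p + (- p$1) *s q = 0" using c1 c2 by (simp add: vec3_eq algebra_simps)
    then show False using ind h by fastforce
  next
    assume h: "p$2 \<noteq> 0"
    have "q$2 *s p + (- p$2) *s q = 0" using c1 c3 by (simp add: vec3_eq algebra_simps)
    then show False using ind h by fastforce
  next
    assume h: "p$3 \<noteq> 0"
    have "q$3 *s p + (- p$3) *s q = 0" using c2 c3 by (simp add: vec3_eq algebra_simps)
    then show False using ind h by fastforce
  qed
qed

lemma case_e2:
  assumes sub: "s2_subalgebra A" and e2: "s2e2 \<in> A" and xA: "x \<in> A" and x2: "x$2 = 0"
    and x0: "x \<noteq> 0" and Asp: "A \<subseteq> vec.span {s2e2, x}"
  shows "A = vec.span {s2e1, s2e2} \<or> A = vec.span {s2e1 + s2e3, s2e2} \<or> A = vec.span {s2e1 - s2e3, s2e2}"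
proof -
  have subA: "vec.subspace A" using sub by (simp add: s2_subalgebra_def)
  have Aeq: "A = vec.span {s2e2, x}"
    using Asp vec.span_minimal[of "{s2e2, x}" A] subA e2 xA by auto
  have "s2mult x x \<in> A" using sub xA by (simp add: s2_subalgebra_def)
  then obtain s t where st: "s2mult x x = s *s s2e2 + t *s x" using Aeq span2 by blast
  have E1: "x$1 * x$1 + x$3 * x$3 = t * x$1" and E3: "2 * x$1 * x$3 = t * x$3"
    using st x2 by (simp_all add: vec3_eq)
  show ?thesis
  proof (cases "x$3 = 0")
    case True
    then have x1: "x$1 \<noteq> 0" using x0 x2 by (auto simp: vec3_eq)
    have "vec.span {s2e2, x} = vec.span {s2e1, s2e2}"
      apply (rule span_eq2)
         apply (rule span2I[where a=0 and b="1 / x$1"])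
         using x1 x2 True apply (simp add: vec3_eq)
        apply (rule span2I[where a=1 and b=0]) apply (simp add: vec3_eq)
       apply (rule span2I[where a=0 and b=1]) apply (simp add: vec3_eq)
      apply (rule span2I[where a="x$1" and b=0]) using x2 True apply (simp add: vec3_eq)
      done
    then show ?thesis using Aeq by simp
  next
    case False
    then have t: "t = 2 * x$1" using E3 by (simp add: mult.commute)
    then have "x$3 * x$3 = x$1 * x$1" using E1 by (simp add: algebra_simps)
    then have "(x$3 - x$1) * (x$3 + x$1) = 0" by (simp add: algebra_simps)
    then have pm: "x$3 = x$1 \<or> x$3 = - x$1" by (simp add: eq_neg_iff_add_eq_0)
    have x1: "x$1 \<noteq> 0" using pm False by auto
    from pm show ?thesis
    proof
      assume h: "x$3 = x$1"
      have "vec.span {s2e2, x} = vec.span {s2e1 + s2e3, s2e2}"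
        apply (rule span_eq2)
           apply (rule span2I[where a=0 and b="1 / x$1"])
           using x1 x2 h apply (simp add: vec3_eq)
          apply (rule span2I[where a=1 and b=0]) apply (simp add: vec3_eq)
         apply (rule span2I[where a=0 and b=1]) apply (simp add: vec3_eq)
        apply (rule span2I[where a="x$1" and b=0]) using x2 h apply (simp add: vec3_eq)
        done
      then show ?thesis using Aeq by simp
    next
      assume h: "x$3 = - x$1"
      have "vec.span {s2e2, x} = vec.span {s2e1 - s2e3, s2e2}"
        apply (rule span_eq2)
           apply (rule span2I[where a=0 and b="1 / x$1"])
           using x1 x2 h apply (simp add: vec3_eq)
          apply (rule span2I[where a=1 and b=0]) apply (simp add: vec3_eq)
         apply (rule span2I[where a=0 and b=1]) apply (simp add: vec3_eq)
        apply (rule span2I[where a="x$1" and b=0]) using x2 h apply (simp add: vec3_eq)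
        done
      then show ?thesis using Aeq by simp
    qed
  qed
qed


lemma classify:
  assumes sub: "s2_subalgebra A" and dimA: "vec.dim A = 2"
  shows "A = vec.span {s2e1, s2e2} \<or> A = vec.span {s2e1 + s2e3, s2e2} \<or>
         A = vec.span {s2e1 - s2e3, s2e2} \<or> (\<exists>\<alpha>::complex. A = vec.span {s2e1, \<alpha> *s s2e2 + s2e3})"
proof -
  have subA: "vec.subspace A" using sub by (simp add: s2_subalgebra_def)
  have clo: "\<And>x y. x \<in> A \<Longrightarrow> y \<in> A \<Longrightarrow> s2mult x y \<in> A" using sub by (simp add: s2_subalgebra_def)
  have lin: "\<And>a b x y. x \<in> A \<Longrightarrow> y \<in> A \<Longrightarrow> a *s x + b *s y \<in> A"
    using subA by (intro vec.subspace_add vec.subspace_scale) auto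
  obtain B where B: "B \<subseteq> A" "vec.independent B" "A \<subseteq> vec.span B" "card B = 2"
    using vec.basis_exists[of A] dimA by metis
  then obtain p q where pq: "B = {p, q}" "p \<noteq> q" by (meson card_2_iff)
  have pA: "p \<in> A" and qA: "q \<in> A" using B pq by auto
  have Asp: "A \<subseteq> vec.span {p, q}" using B pq by simp
  have ind: "\<And>a b. a *s p + b *s q = 0 \<Longrightarrow> a = 0 \<and> b = 0"
    using indep_pair B(2) pq by blast
  define d where "d = p$1 * q$3 - p$3 * q$1"
  show ?thesis
  proof (cases "s2e2 \<in> A")
    case e2A: True
    show ?thesis
    proof (cases "d = 0")
      case False
      define u where "u = (q$3 / d) *s p + (- p$3 / d) *s q"
      define v where "v = (- q$1 / d) *s p + (p$1 / d) *s q"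
      have uA: "u \<in> A" and vA: "v \<in> A" unfolding u_def v_def by (rule lin[OF pA qA])+
      have dd: "q$3 * p$1 - p$3 * q$1 = d" "p$1 * q$3 - q$1 * p$3 = d" by (simp_all add: d_def mult.commute)
      have "u$1 = (q$3 * p$1 - p$3 * q$1) / d" "u$3 = (q$3 * p$3 - p$3 * q$3) / d"
           "v$1 = (p$1 * q$1 - q$1 * p$1) / d" "v$3 = (p$1 * q$3 - q$1 * p$3) / d"
        by (simp_all add: u_def v_def diff_divide_distrib)
      then have "u$1 = d / d" "u$3 = 0 / d" "v$1 = 0 / d" "v$3 = d / d"
        unfolding dd by simp_all
      then have u1: "u$1 = 1" "u$3 = 0" "v$1 = 0" "v$3 = 1"
        using False by simp_all
      have e1A: "s2e1 \<in> A"
      proof -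
        have "1 *s u + (- u$2) *s s2e2 \<in> A" using lin uA e2A by blast
        moreover have "1 *s u + (- u$2) *s s2e2 = s2e1" using u1 by (simp add: vec3_eq)
        ultimately show ?thesis by simp
      qed
      have e3A: "s2e3 \<in> A"
      proof -
        have "1 *s v + (- v$2) *s s2e2 \<in> A" using lin vA e2A by blast
        moreover have "1 *s v + (- v$2) *s s2e2 = s2e3" using u1 by (simp add: vec3_eq)
        ultimately show ?thesis by simp
      qed
      have i23: "vec.independent {s2e2, s2e3}"
        by (rule indep2) (auto simp: vec3_eq)
      have "s2e1 \<notin> vec.span {s2e2, s2e3}"
        by (auto simp: span2 vec3_eq)
      then have i123: "vec.independent {s2e1, s2e2, s2e3}"
        using i23 by (rule vec.independent_insertI)
      have "card {s2e1, s2e2, s2e3} \<le> vec.dim A"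
        using e1A e2A e3A i123 by (intro vec.independent_card_le_dim) auto
      moreover have "card {s2e1, s2e2, s2e3} = 3" by (simp add: vec3_eq)
      ultimately show ?thesis using dimA by simp
    next
      case d0: True
      show ?thesis
      proof (cases "p$1 = 0 \<and> p$3 = 0")
        case False
        define x where "x = 1 *s p + (- p$2) *s s2e2"
        have xA: "x \<in> A" unfolding x_def using lin pA e2A by blast
        have x2: "x$2 = 0" by (simp add: x_def)
        have x0: "x \<noteq> 0" using False by (auto simp: x_def vec3_eq)
        define c where "c = (if p$1 \<noteq> 0 then q$1 / p$1 else q$3 / p$3)"
        have "p \<in> vec.span {s2e2, x}"
          by (rule span2I[where a="p$2" and b=1]) (simp add: x_def vec3_eq)
        moreover have "q \<in> vec.span {s2e2, x}"
        proof (rule span2I[where a="q$2" and b=c])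
          show "q = q$2 *s s2e2 + c *s x"
          proof (cases "p$1 = 0")
            case True
            then have "p$3 \<noteq> 0" using False by simp
            then show ?thesis using True d0 by (simp add: x_def c_def vec3_eq d_def)
          next
            case F: False
            then show ?thesis using d0 by (simp add: x_def c_def vec3_eq d_def field_simps)
          qed
        qed
        ultimately have "A \<subseteq> vec.span {s2e2, x}"
          using Asp vec.span_minimal[of "{p, q}" "vec.span {s2e2, x}"] by auto
        then show ?thesis using case_e2[OF sub e2A xA x2 x0] by blast
      next
        case p13: True
        show ?thesis
        proof (cases "q$1 = 0 \<and> q$3 = 0")
          case True
          then have False using p13 by (intro cross_dep[OF ind]) auto
          then show ?thesis ..
        next
          case False
          define x where "x = 1 *s q + (- q$2) *s s2e2"
          have xA: "x \<in> A" unfolding x_def using lin qA e2A by blast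
          have x2: "x$2 = 0" by (simp add: x_def)
          have x0: "x \<noteq> 0" using False by (auto simp: x_def vec3_eq)
          have "p \<in> vec.span {s2e2, x}"
            by (rule span2I[where a="p$2" and b=0]) (use p13 in \<open>simp add: x_def vec3_eq\<close>)
          moreover have "q \<in> vec.span {s2e2, x}"
            by (rule span2I[where a="q$2" and b=1]) (simp add: x_def vec3_eq)
          ultimately have "A \<subseteq> vec.span {s2e2, x}"
            using Asp vec.span_minimal[of "{p, q}" "vec.span {s2e2, x}"] by auto
          then show ?thesis using case_e2[OF sub e2A xA x2 x0] by blast
        qed
      qed
    qed
  next
    case ne2: False
    have z: "\<And>w. w \<in> A \<Longrightarrow> w$1 = 0 \<Longrightarrow> w$3 = 0 \<Longrightarrow> w = 0"
    proof -
      fix w assume w: "w \<in> A" "w$1 = 0" "w$3 = 0"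
      show "w = 0"
      proof (rule ccontr)
        assume "w \<noteq> 0"
        then have w2: "w$2 \<noteq> 0" using w by (simp add: vec3_eq)
        have "(1 / w$2) *s w + 0 *s w \<in> A" using lin w by blast
        moreover have "(1 / w$2) *s w + 0 *s w = s2e2" using w w2 by (simp add: vec3_eq)
        ultimately show False using ne2 by simp
      qed
    qed
    show ?thesis
    proof (cases "d = 0")
      case d0: True
      have "q$3 *s p + (- p$3) *s q = 0"
        by (rule z[OF lin[OF pA qA]]) (use d0 in \<open>simp_all add: d_def algebra_simps\<close>)
      then have c1: "p$2 * q$3 = p$3 * q$2" by (simp add: vec3_eq algebra_simps)
      have "q$1 *s p + (- p$1) *s q = 0"
        by (rule z[OF lin[OF pA qA]]) (use d0 in \<open>simp_all add: d_def algebra_simps\<close>)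
      then have c2: "p$1 * q$2 = p$2 * q$1" by (simp add: vec3_eq algebra_simps)
      have "p$1 * q$3 = p$3 * q$1" using d0 by (simp add: d_def)
      then have False using cross_dep[OF ind] c1 c2 by blast
      then show ?thesis ..
    next
      case False
      define u where "u = (q$3 / d) *s p + (- p$3 / d) *s q"
      define v where "v = (- q$1 / d) *s p + (p$1 / d) *s q"
      have uA: "u \<in> A" and vA: "v \<in> A" unfolding u_def v_def by (rule lin[OF pA qA])+
      have dd: "q$3 * p$1 - p$3 * q$1 = d" "p$1 * q$3 - q$1 * p$3 = d" by (simp_all add: d_def mult.commute)
      have "u$1 = (q$3 * p$1 - p$3 * q$1) / d" "u$3 = (q$3 * p$3 - p$3 * q$3) / d"
           "v$1 = (p$1 * q$1 - q$1 * p$1) / d" "v$3 = (p$1 * q$3 - q$1 * p$3) / d"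
        by (simp_all add: u_def v_def diff_divide_distrib)
      then have "u$1 = d / d" "u$3 = 0 / d" "v$1 = 0 / d" "v$3 = d / d"
        unfolding dd by simp_all
      then have u1: "u$1 = 1" "u$3 = 0" "v$1 = 0" "v$3 = 1"
        using False by simp_all
      have "1 *s s2mult u u + (- 1) *s u = 0"
        by (rule z[OF lin[OF clo[OF uA uA] uA]]) (use u1 in simp_all)
      then have "u$2 = 0" using u1 by (simp add: vec3_eq)
      then have ue: "u = s2e1" using u1 by (simp add: vec3_eq)
      define \<alpha> where "\<alpha> = v$2"
      have ve: "v = \<alpha> *s s2e2 + s2e3" using u1 by (simp add: vec3_eq \<alpha>_def)
      have "1 *s p + (- 1) *s (p$1 *s u + p$3 *s v) = 0"
        by (rule z[OF lin[OF pA lin[OF uA vA]]]) (use u1 in simp_all)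
      then have "p = p$1 *s u + p$3 *s v" by (simp add: algebra_simps eq_neg_iff_add_eq_0[symmetric] diff_eq_eq)
      then have "p = p$1 *s s2e1 + p$3 *s v" unfolding ue .
      then have "p \<in> vec.span {s2e1, v}" by (metis span2I)
      moreover have "q \<in> vec.span {s2e1, v}"
      proof -
        have "1 *s q + (- 1) *s (q$1 *s u + q$3 *s v) = 0"
          by (rule z[OF lin[OF qA lin[OF uA vA]]]) (use u1 in simp_all)
        then have "q = q$1 *s u + q$3 *s v" by (simp add: algebra_simps eq_neg_iff_add_eq_0[symmetric] diff_eq_eq)
      then have "q = q$1 *s s2e1 + q$3 *s v" unfolding ue .
        then show ?thesis by (metis span2I)
      qed
      ultimately have "A \<subseteq> vec.span {s2e1, v}"
        using Asp vec.span_minimal[of "{p, q}" "vec.span {s2e1, v}"] by auto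
      moreover have "vec.span {s2e1, v} \<subseteq> A"
        using vec.span_minimal[of "{s2e1, v}" A] subA uA vA ue by auto
      ultimately have "A = vec.span {s2e1, \<alpha> *s s2e2 + s2e3}" using ve by auto
      then show ?thesis by blast
    qed
  qed
qed


definition fb :: "complex \<Rightarrow> complex^3 \<Rightarrow> complex^3" where
  "fb \<beta> x = (\<chi> i. if i = 2 then x$2 + \<beta> * x$3 else x$i)"

lemma fb_simps[simp]: "fb \<beta> x $ 1 = x$1" "fb \<beta> x $ 2 = x$2 + \<beta> * x$3" "fb \<beta> x $ 3 = x$3"
  by (simp_all add: fb_def)

lemma fb_linear: "Vector_Spaces.linear (*s) (*s) (fb \<beta>)"
  by unfold_locales (simp_all add: vec3_eq algebra_simps)

lemma fb_aut: "s2_automorphism (fb \<beta>)"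
  unfolding s2_automorphism_def
proof (intro conjI allI fb_linear)
  show "bij (fb \<beta>)"
  proof (rule bijI)
    show "inj (fb \<beta>)" by (rule injI) (auto simp: vec3_eq)
    show "surj (fb \<beta>)"
    proof (rule surjI)
      fix x show "fb \<beta> (fb (- \<beta>) x) = x" by (simp add: vec3_eq)
    qed
  qed
  fix x y show "fb \<beta> (s2mult x y) = s2mult (fb \<beta> x) (fb \<beta> y)"
    by (simp add: vec3_eq algebra_simps)
qed

lemma id_aut: "s2_automorphism id"
  by (simp add: s2_automorphism_def vec.linear_id)

theorem mainTheorem17:
  shows "(\<forall>A. (s2_subalgebra A \<and> vec.dim A = 2) \<longleftrightarrow>
            (A = vec.span {s2e1, s2e2} \<or>
             A = vec.span {s2e1 + s2e3, s2e2} \<or>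
             A = vec.span {s2e1 - s2e3, s2e2} \<or>
             (\<exists>\<alpha>::complex. A = vec.span {s2e1, \<alpha> *s s2e2 + s2e3})))
       \<and> (\<forall>A. s2_subalgebra A \<and> vec.dim A = 2 \<longrightarrow>
            (\<exists>f. s2_automorphism f \<and>
               (f ` A = vec.span {s2e1, s2e2} \<or>
                f ` A = vec.span {s2e1 + s2e3, s2e2} \<or>
                f ` A = vec.span {s2e1 - s2e3, s2e2} \<or>
                f ` A = vec.span {s2e1, s2e3})))"
proof (rule conjI; intro allI impI iffI)
  fix A assume "s2_subalgebra A \<and> vec.dim A = 2"
  then show "A = vec.span {s2e1, s2e2} \<or>
             A = vec.span {s2e1 + s2e3, s2e2} \<or>
             A = vec.span {s2e1 - s2e3, s2e2} \<or>
             (\<exists>\<alpha>::complex. A = vec.span {s2e1, \<alpha> *s s2e2 + s2e3})"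
    using classify by blast
next
  fix A assume "A = vec.span {s2e1, s2e2} \<or>
             A = vec.span {s2e1 + s2e3, s2e2} \<or>
             A = vec.span {s2e1 - s2e3, s2e2} \<or>
             (\<exists>\<alpha>::complex. A = vec.span {s2e1, \<alpha> *s s2e2 + s2e3})"
  then show "s2_subalgebra A \<and> vec.dim A = 2"
    using conv1 conv2 conv3 conv4 by blast
next
  fix A assume "s2_subalgebra A \<and> vec.dim A = 2"
  then have "A = vec.span {s2e1, s2e2} \<or>
             A = vec.span {s2e1 + s2e3, s2e2} \<or>
             A = vec.span {s2e1 - s2e3, s2e2} \<or>
             (\<exists>\<alpha>::complex. A = vec.span {s2e1, \<alpha> *s s2e2 + s2e3})"
    using classify by blast
  then show "\<exists>f. s2_automorphism f \<and>
               (f ` A = vec.span {s2e1, s2e2} \<or>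
                f ` A = vec.span {s2e1 + s2e3, s2e2} \<or>
                f ` A = vec.span {s2e1 - s2e3, s2e2} \<or>
                f ` A = vec.span {s2e1, s2e3})"
  proof (elim disjE exE)
    fix \<alpha> assume A: "A = vec.span {s2e1, \<alpha> *s s2e2 + s2e3}"
    have "fb (- \<alpha>) ` A = vec.span (fb (- \<alpha>) ` {s2e1, \<alpha> *s s2e2 + s2e3})"
      unfolding A vec.linear_span_image[OF fb_linear] ..
    also have "fb (- \<alpha>) ` {s2e1, \<alpha> *s s2e2 + s2e3} = {s2e1, s2e3}"
    proof -
      have "fb (- \<alpha>) s2e1 = s2e1" "fb (- \<alpha>) (\<alpha> *s s2e2 + s2e3) = s2e3"
        by (simp_all add: vec3_eq)
      then show ?thesis by simp
    qed
    finally show ?thesis using fb_aut by blast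
  qed (use id_aut in fastforce)+
qed

end
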